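(* Assume the vector variational inequality defined by $F$ and $K$ is monotone. If the weak Pareto solution set $\mathrm{Sol}^w(F,K)$ is disconnected, then each connected component of $\mathrm{Sol}^w(F,K)$ is unbounded.
   Context: Let $K\subset\mathbb{R}^n$ be a nonempty closed convex set and $F_1,\dots,F_m:K\to\mathbb{R}^n$ continuous functions; write $F=(F_1,\dots,F_m)$ and $F(x)(u)=(\langle F_1(x),u\rangle,\dots,\langle F_m(x),u\rangle)$. The problem is monotone if each $F_l$ is monotone on $K$: $\langle F_l(y)-F_l(x),y-x\rangle\ge0$ for all $x,y\in K$. The weak Pareto solution set $\mathrm{Sol}^w(F,K)$ is the set of $x\in K$ such that $F(x)(x-y)\notin\operatorname{int}\mathbb{R}^m_+$ for all $y\in K$. *)

theory Defs
  imports "HOL-Analysis.Analysis"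
begin

text \<open>A vector variational inequality in R^n with m objective maps F l, l ranging over the
finite index type 'm (so m = CARD('m)). F(x)(u) is the vector (<F_l(x),u>)_l in R^m.\<close>

definition vvi_monotone :: "('m \<Rightarrow> real^'n \<Rightarrow> real^'n) \<Rightarrow> (real^'n) set \<Rightarrow> bool" where
  "vvi_monotone F K \<longleftrightarrow>
     (\<forall>l. \<forall>x\<in>K. \<forall>y\<in>K. (F l y - F l x) \<bullet> (y - x) \<ge> 0)"

definition Sol_w :: "('m::finite \<Rightarrow> real^'n \<Rightarrow> real^'n) \<Rightarrow> (real^'n) set \<Rightarrow> (real^'n) set" where
  "Sol_w F K = {x \<in> K. \<forall>y\<in>K. \<not> (\<forall>l. F l x \<bullet> (x - y) > 0)}"

end

theory Submission
  imports Defs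
begin


definition Sol :: "('a::real_inner \<Rightarrow> 'a) \<Rightarrow> 'a set \<Rightarrow> 'a set" where
  "Sol G K = {x\<in>K. \<forall>y\<in>K. G x \<bullet> (y - x) \<ge> 0}"

definition monoK :: "('a::real_inner \<Rightarrow> 'a) \<Rightarrow> 'a set \<Rightarrow> bool" where
  "monoK G K \<longleftrightarrow> (\<forall>x\<in>K. \<forall>y\<in>K. (G y - G x) \<bullet> (y - x) \<ge> 0)"

lemma minty:
  fixes G :: "'a::real_inner \<Rightarrow> 'a"
  assumes "convex K" "continuous_on K G" "x \<in> K" "\<forall>y\<in>K. G y \<bullet> (y - x) \<ge> 0"
  shows "x \<in> Sol G K"
  unfolding Sol_def
proof (intro CollectI conjI ballI assms(3))
  fix y assume yK: "y \<in> K"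
  show "0 \<le> G x \<bullet> (y - x)"
  proof (rule ccontr)
  assume neg: "\<not> 0 \<le> G x \<bullet> (y - x)"
  define c where "c = G x \<bullet> (y - x)"
  have c: "c < 0" using neg c_def by simp
  define e where "e = - c / (norm (y - x) + 1)"
  have e: "e > 0" unfolding e_def using c norm_ge_zero[of "y - x"] by (intro divide_pos_pos) linarith+
  obtain d where d: "d > 0" "\<forall>z\<in>K. dist z x < d \<longrightarrow> dist (G z) (G x) < e"
    using assms(2) assms(3) e unfolding continuous_on_iff by blast
  define t where "t = min (1/2) (d / (2 * (norm (y - x) + 1)))"
  have np: "norm (y - x) + 1 > 0" using norm_ge_zero[of "y - x"] by linarith
  have q: "d / (2 * (norm (y - x) + 1)) > 0" using d(1) np by (intro divide_pos_pos) auto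
  have t: "0 < t" "t \<le> 1" using q unfolding t_def by auto
  define z where "z = x + t *\<^sub>R (y - x)"
  have zK: "z \<in> K"
  proof -
    have "z = (1 - t) *\<^sub>R x + t *\<^sub>R y" by (simp add: z_def algebra_simps)
    then show ?thesis using assms(1) assms(3) yK t by (simp add: convex_def)
  qed
  have "dist z x = t * norm (y - x)" using t by (simp add: z_def dist_norm)
  also have "\<dots> \<le> d / (2 * (norm (y - x) + 1)) * norm (y - x)"
    by (intro mult_right_mono) (auto simp: t_def)
  also have "\<dots> < d"
  proof -
    have "norm (y - x) / (2 * (norm (y - x) + 1)) < 1"
      using np by (subst divide_less_eq) auto
    then have "d * (norm (y - x) / (2 * (norm (y - x) + 1))) < d * 1"
      using d(1) by (intro mult_strict_left_mono) auto
    then show ?thesis by simp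
  qed
  finally have "dist (G z) (G x) < e" using d zK by blast
  have "G z \<bullet> (z - x) \<ge> 0" using assms(4) zK by blast
  then have "t * (G z \<bullet> (y - x)) \<ge> 0" by (simp add: z_def inner_scaleR_right)
  then have g0: "G z \<bullet> (y - x) \<ge> 0" using t by (simp add: zero_le_mult_iff)
  have "G z \<bullet> (y - x) = c + (G z - G x) \<bullet> (y - x)" by (simp add: c_def inner_diff_left)
  also have "\<dots> \<le> c + norm (G z - G x) * norm (y - x)"
    using norm_cauchy_schwarz by auto
  also have "\<dots> \<le> c + e * norm (y - x)"
    using \<open>dist (G z) (G x) < e\<close> by (intro add_left_mono mult_right_mono) (auto simp: dist_norm)
  also have "\<dots> < 0"
  proof -
    have "e * norm (y - x) < - c"
    proof -
      have "e * norm (y - x) = - c * (norm (y - x) / (norm (y - x) + 1))" by (simp add: e_def)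
      also have "\<dots> < - c * 1" using c np by (intro mult_strict_left_mono) (auto simp: divide_less_eq)
      finally show ?thesis by simp
    qed
    then show ?thesis by simp
  qed
  finally show False using g0 by simp
qed
qed

lemma sol_minty:
  assumes "monoK G K" "x \<in> Sol G K" "y \<in> K"
  shows "G y \<bullet> (y - x) \<ge> 0"
proof -
  have "(G y - G x) \<bullet> (y - x) \<ge> 0" "G x \<bullet> (y - x) \<ge> 0"
    using assms by (auto simp: monoK_def Sol_def)
  then show ?thesis by (simp add: inner_diff_left)
qed

lemma sol_convex:
  fixes G :: "'a::real_inner \<Rightarrow> 'a"
  assumes "convex K" "continuous_on K G" "monoK G K"
  shows "convex (Sol G K)"
  unfolding convex_def
proof (intro allI impI ballI)
  fix x1 x2 and u v :: real
  assume x: "x1 \<in> Sol G K" "x2 \<in> Sol G K" and uv: "0 \<le> u" "0 \<le> v" "u + v = 1"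
  have K: "u *\<^sub>R x1 + v *\<^sub>R x2 \<in> K" using x uv assms(1) by (auto simp: Sol_def convex_def)
  show "u *\<^sub>R x1 + v *\<^sub>R x2 \<in> Sol G K"
  proof (rule minty[OF assms(1,2) K], intro ballI)
    fix y assume y: "y \<in> K"
    have "y - (u *\<^sub>R x1 + v *\<^sub>R x2) = u *\<^sub>R (y - x1) + v *\<^sub>R (y - x2)"
      using uv by (simp add: algebra_simps flip: scaleR_add_left)
    then have "G y \<bullet> (y - (u *\<^sub>R x1 + v *\<^sub>R x2)) = u * (G y \<bullet> (y - x1)) + v * (G y \<bullet> (y - x2))"
      by (simp add: inner_add_right inner_scaleR_right)
    moreover have "G y \<bullet> (y - x1) \<ge> 0" "G y \<bullet> (y - x2) \<ge> 0"
      using sol_minty[OF assms(3)] x y by auto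
    ultimately show "G y \<bullet> (y - (u *\<^sub>R x1 + v *\<^sub>R x2)) \<ge> 0" using uv by simp
  qed
qed

lemma exist_local:
  fixes G :: "'a::euclidean_space \<Rightarrow> 'a"
  assumes "compact D" "convex D" "D \<noteq> {}" "continuous_on D G"
  shows "\<exists>x\<in>D. \<forall>y\<in>D. G x \<bullet> (y - x) \<ge> 0"
proof -
  define f where "f = (\<lambda>x. closest_point D (x - G x))"
  have cD: "closed D" using assms(1) compact_imp_closed by blast
  have "continuous_on D f" unfolding f_def
    by (rule continuous_on_compose2[OF continuous_on_closest_point[OF assms(2) cD assms(3)]])
       (auto intro!: continuous_intros assms(4))
  moreover have "f \<in> D \<rightarrow> D" unfolding f_def using closest_point_in_set[OF cD assms(3)] by auto
  ultimately obtain x where x: "x \<in> D" "f x = x" using brouwer[OF assms(1-3)] by metis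
  have "\<forall>y\<in>D. G x \<bullet> (y - x) \<ge> 0"
  proof
    fix y assume "y \<in> D"
    from closest_point_dot[OF assms(2) cD this, of "x - G x"] x(2)
    show "G x \<bullet> (y - x) \<ge> 0" by (simp add: f_def)
  qed
  then show ?thesis using x by blast
qed

lemma local_to_global:
  fixes G :: "'a::real_inner \<Rightarrow> 'a"
  assumes "convex K" "x \<in> K" "dist x x0 < r" "r < R"
    and "\<forall>y\<in>K \<inter> cball x0 R. G x \<bullet> (y - x) \<ge> 0"
  shows "x \<in> Sol G K"
  unfolding Sol_def
proof (intro CollectI conjI ballI assms(2))
  fix y assume yK: "y \<in> K"
  define n where "n = norm (y - x)"
  have n0: "n \<ge> 0" by (simp add: n_def)
  define s where "s = min 1 ((R - r) / (n + 1))"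
  have s: "0 < s" "s \<le> 1" using assms(4) n0 by (auto simp: s_def)
  define w where "w = x + s *\<^sub>R (y - x)"
  have wK: "w \<in> K"
  proof -
    have "w = (1 - s) *\<^sub>R x + s *\<^sub>R y" by (simp add: w_def algebra_simps)
    then show ?thesis using assms(1,2) yK s by (simp add: convex_def)
  qed
  have "s * n \<le> (R - r) / (n + 1) * n" using n0 by (intro mult_right_mono) (auto simp: s_def)
  also have "\<dots> \<le> R - r"
  proof -
    have "n / (n + 1) \<le> 1" using n0 by simp
    then have "(R - r) * (n / (n + 1)) \<le> (R - r) * 1" using assms(4) by (intro mult_left_mono) auto
    then show ?thesis by simp
  qed
  finally have sn: "s * n \<le> R - r" .
  have "dist x0 w \<le> dist x0 x + dist x w" by (rule dist_triangle)
  also have "dist x w = s * n" using s by (simp add: w_def dist_norm n_def)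
  finally have "dist x0 w \<le> R" using sn assms(3) by (simp add: dist_commute)
  then have "G x \<bullet> (w - x) \<ge> 0" using assms(5) wK by auto
  then have "s * (G x \<bullet> (y - x)) \<ge> 0" by (simp add: w_def inner_scaleR_right)
  then show "G x \<bullet> (y - x) \<ge> 0" using s by (simp add: zero_le_mult_iff)
qed

lemma stab:
  fixes G :: "'a::euclidean_space \<Rightarrow> 'a"
  assumes K: "closed K" "convex K" and contG: "continuous_on K G" and monoG: "monoK G K"
    and x0: "x0 \<in> Sol G K" and U: "open U" "Sol G K \<subseteq> U" "U \<subseteq> ball x0 r"
  shows "\<exists>P \<epsilon>. finite P \<and> P \<subseteq> K \<and> \<epsilon> > 0 \<and>
     (\<forall>G'. continuous_on K G' \<longrightarrow> monoK G' K \<longrightarrow> (\<forall>p\<in>P. norm (G' p - G p) < \<epsilon>)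
        \<longrightarrow> (\<exists>x\<in>U. x \<in> Sol G' K))"
proof -
  have x0K: "x0 \<in> K" using x0 by (simp add: Sol_def)
  have r0: "r > 0" using x0 U by auto
  define T where "T = (K \<inter> cball x0 r) - U"
  have "T = cball x0 r \<inter> (K \<inter> - U)" by (auto simp: T_def)
  moreover have "closed (K \<inter> - U)" using K(1) U(1) by (intro closed_Int) auto
  ultimately have cT: "compact T" by (simp add: compact_Int_closed)
  define Om where "Om = (\<lambda>q::'a \<times> real. {z. G (fst q) \<bullet> (fst q - z) < - snd q})"
  define I where "I = {q::'a \<times> real. fst q \<in> K \<and> snd q > 0}"
  have opn: "open (Om q)" for q
    unfolding Om_def by (intro open_Collect_less continuous_intros)
  have cov: "T \<subseteq> (\<Union>q\<in>I. Om q)"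
  proof
    fix z assume z: "z \<in> T"
    then have zK: "z \<in> K" and "z \<notin> Sol G K" using U by (auto simp: T_def)
    then obtain y where y: "y \<in> K" "G y \<bullet> (y - z) < 0"
      using minty[OF K(2) contG zK] by force
    then have "(y, - (G y \<bullet> (y - z)) / 2) \<in> I" "z \<in> Om (y, - (G y \<bullet> (y - z)) / 2)"
      by (auto simp: I_def Om_def)
    then show "z \<in> (\<Union>q\<in>I. Om q)" by blast
  qed
  obtain Q where Q: "Q \<subseteq> I" "finite Q" "T \<subseteq> (\<Union>q\<in>Q. Om q)"
    using compactE_image[OF cT opn cov] by metis
  define \<eta> where "\<eta> = Min (insert 1 (snd ` Q))"
  have \<eta>0: "\<eta> > 0" using Q(1,2) by (auto simp: \<eta>_def I_def)
  have \<eta>le: "\<eta> \<le> snd q" if "q \<in> Q" for q using Q(2) that by (auto simp: \<eta>_def)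
  define R where "R = Max (insert r ((\<lambda>q. norm (fst q - x0)) ` Q)) + 1"
  have Rr: "r + 1 \<le> R" using Q(2) by (simp add: R_def)
  have Rq: "norm (fst q - x0) \<le> R" if "q \<in> Q" for q
  proof -
    have "norm (fst q - x0) \<le> Max (insert r ((\<lambda>q. norm (fst q - x0)) ` Q))"
      using Q(2) that by (intro Max_ge) auto
    then show ?thesis by (simp add: R_def)
  qed
  have R0: "R > 0" using Rr r0 by linarith
  define P where "P = insert x0 (fst ` Q)"
  define \<epsilon> where "\<epsilon> = \<eta> / (4 * R)"
  have \<epsilon>0: "\<epsilon> > 0" using \<eta>0 R0 by (simp add: \<epsilon>_def)
  have "finite P" "P \<subseteq> K" using Q x0K by (auto simp: P_def I_def)
  moreover have "\<exists>x\<in>U. x \<in> Sol G' K"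
    if contG': "continuous_on K G'" and monoG': "monoK G' K" and close: "\<forall>p\<in>P. norm (G' p - G p) < \<epsilon>" for G'
  proof -
    define D where "D = K \<inter> cball x0 R"
    have cD: "compact D" using K(1) by (simp add: D_def closed_Int_compact)
    have vD: "convex D" using K(2) by (simp add: D_def convex_Int)
    have nD: "D \<noteq> {}" using x0K R0 by (auto simp: D_def)
    have ctD: "continuous_on D G'" using contG' by (rule continuous_on_subset) (auto simp: D_def)
    obtain x' where x'D: "x' \<in> D" and x'sol: "\<forall>y\<in>D. G' x' \<bullet> (y - x') \<ge> 0"
      using exist_local[OF cD vD nD ctD] by blast
    have x'K: "x' \<in> K" using x'D by (simp add: D_def)
    have mint: "G' y \<bullet> (y - x') \<ge> 0" if "y \<in> D" for y
    proof -
      have "(G' y - G' x') \<bullet> (y - x') \<ge> 0" using monoG' that x'D by (auto simp: monoK_def D_def)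
      moreover have "G' x' \<bullet> (y - x') \<ge> 0" using x'sol that by blast
      ultimately show ?thesis by (simp add: inner_diff_left)
    qed
    have x'U: "x' \<in> U"
    proof (rule ccontr)
      assume nU: "x' \<notin> U"
      define t where "t = (if norm (x' - x0) \<le> r then 1 else r / norm (x' - x0))"
      have t: "0 < t" "t \<le> 1" using r0 by (auto simp: t_def divide_le_eq_1 intro!: divide_pos_pos)
      define z where "z = x0 + t *\<^sub>R (x' - x0)"
      have zK: "z \<in> K"
      proof -
        have "z = (1 - t) *\<^sub>R x0 + t *\<^sub>R x'" by (simp add: z_def algebra_simps)
        then show ?thesis using K(2) x0K x'K t by (simp add: convex_def)
      qed
      have nz: "norm (z - x0) = t * norm (x' - x0)" using t by (simp add: z_def)
      have zr: "norm (z - x0) \<le> r"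
      proof (cases "norm (x' - x0) \<le> r")
        case True then show ?thesis using nz by (simp add: t_def)
      next
        case False then show ?thesis using nz r0 by (simp add: t_def)
      qed
      have zU: "z \<notin> U"
      proof (cases "norm (x' - x0) \<le> r")
        case True then show ?thesis using nU by (simp add: t_def z_def)
      next
        case False
        then have "x' \<noteq> x0" using r0 by auto
        then have "norm (z - x0) = r" using nz r0 False by (simp add: t_def)
        then show ?thesis using U(3) by (auto simp: dist_norm norm_minus_commute)
      qed
      have "z \<in> T" using zK zr zU by (simp add: T_def dist_norm norm_minus_commute)
      then obtain q where q: "q \<in> Q" "z \<in> Om q" using Q(3) by blast
      define y where "y = fst q"
      have yK: "y \<in> K" using q Q(1) by (auto simp: y_def I_def)
      have yR: "norm (y - x0) \<le> R" using Rq q by (simp add: y_def)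
      have yD: "y \<in> D" using yK yR by (simp add: D_def dist_norm norm_minus_commute)
      have Gyz: "G y \<bullet> (y - z) < - \<eta>" using q \<eta>le[OF q(1)] by (simp add: Om_def y_def)
      have yP: "y \<in> P" "x0 \<in> P" using q by (auto simp: P_def y_def)
      have e1: "G' y \<bullet> (y - x') \<ge> 0" using mint yD by blast
      have "G' y \<bullet> (y - x0) \<ge> G' x0 \<bullet> (y - x0)"
        using monoG' x0K yK by (auto simp: monoK_def inner_diff_left)
      moreover have "G x0 \<bullet> (y - x0) \<ge> 0" using x0 yK by (auto simp: Sol_def)
      moreover have "\<bar>(G' x0 - G x0) \<bullet> (y - x0)\<bar> \<le> \<epsilon> * R"
      proof -
        have "\<bar>(G' x0 - G x0) \<bullet> (y - x0)\<bar> \<le> norm (G' x0 - G x0) * norm (y - x0)"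
          by (rule Cauchy_Schwarz_ineq2)
        also have "\<dots> \<le> \<epsilon> * R" using close yP yR \<epsilon>0 by (intro mult_mono) auto
        finally show ?thesis .
      qed
      ultimately have e2: "G' y \<bullet> (y - x0) \<ge> - \<epsilon> * R" by (simp add: inner_diff_left abs_le_iff)
      have yz: "y - z = (1 - t) *\<^sub>R (y - x0) + t *\<^sub>R (y - x')" by (simp add: z_def algebra_simps)
      have "G' y \<bullet> (y - z) = (1 - t) * (G' y \<bullet> (y - x0)) + t * (G' y \<bullet> (y - x'))"
        by (simp add: yz inner_add_right inner_scaleR_right)
      moreover have "(1 - t) * (G' y \<bullet> (y - x0)) \<ge> (1 - t) * (- \<epsilon> * R)"
        using e2 t by (intro mult_left_mono) auto
      moreover have "(1 - t) * (- \<epsilon> * R) \<ge> - \<epsilon> * R" using t \<epsilon>0 R0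
        by (simp add: mult_le_cancel_right1 algebra_simps)
      moreover have "t * (G' y \<bullet> (y - x')) \<ge> 0" using t e1 by simp
      ultimately have e3: "G' y \<bullet> (y - z) \<ge> - \<epsilon> * R" by linarith
      have nyz: "norm (y - z) \<le> 2 * R"
      proof -
        have "norm (y - z) \<le> norm (y - x0) + norm (z - x0)"
          using norm_triangle_ineq4[of "y - x0" "z - x0"] by simp
        then show ?thesis using yR zr Rr by linarith
      qed
      have "\<bar>(G' y - G y) \<bullet> (y - z)\<bar> \<le> \<epsilon> * (2 * R)"
      proof -
        have "\<bar>(G' y - G y) \<bullet> (y - z)\<bar> \<le> norm (G' y - G y) * norm (y - z)"
          by (rule Cauchy_Schwarz_ineq2)
        also have "\<dots> \<le> \<epsilon> * (2 * R)" using close yP nyz \<epsilon>0 by (intro mult_mono) auto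
        finally show ?thesis .
      qed
      then have "G y \<bullet> (y - z) \<ge> - \<epsilon> * R - \<epsilon> * (2 * R)"
        using e3 unfolding inner_diff_left abs_le_iff by linarith
      moreover have "\<epsilon> * R = \<eta> / 4" using R0 by (simp add: \<epsilon>_def)
      ultimately show False using Gyz \<eta>0 by linarith
    qed
    have "dist x' x0 < r" using x'U U(3) by (auto simp: dist_commute)
    moreover have "r < R" using Rr by linarith
    ultimately have "x' \<in> Sol G' K"
      using local_to_global[OF K(2) x'K, of x0 r R G'] x'sol by (simp add: D_def)
    then show ?thesis using x'U by blast
  qed
  ultimately show ?thesis using \<epsilon>0 by blast
qed



lemma clopen_nbhd:
  fixes S :: "'a::euclidean_space set"
  assumes "closed S" "x \<in> S" "bounded (connected_component_set S x)"
    and "p \<in> S" "p \<notin> connected_component_set S x"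
  shows "\<exists>V W. V \<subseteq> S \<and> connected_component_set S x \<subseteq> V \<and> p \<notin> V \<and> bounded V \<and> closed V
           \<and> open W \<and> V = S \<inter> W"
proof -
  define C where "C = connected_component_set S x"
  have "bounded (insert p C)" using assms(3) by (simp add: C_def)
  then obtain \<rho> where \<rho>: "insert p C \<subseteq> ball 0 \<rho>"
    by (meson bounded_subset_ballD)
  define X where "X = S \<inter> cball 0 \<rho>"
  have cX: "compact X" unfolding X_def
    using assms(1) by (simp add: compact_Int_closed closed_Int_compact)
  have CX: "C \<subseteq> X" using \<rho> unfolding X_def C_def by (auto simp: connected_component_subset)
  have xC: "x \<in> C" using assms(2) by (simp add: C_def)
  have ccX: "connected_component_set X x = C"
  proof
    show "connected_component_set X x \<subseteq> C"
      unfolding C_def X_def by (simp add: connected_component_mono)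
    show "C \<subseteq> connected_component_set X x"
      by (rule connected_component_maximal[OF xC _ CX]) (simp add: C_def)
  qed
  let ?T = "top_of_set X"
  have csp: "compact_space ?T"
    using cX by (simp add: compact_space_subtopology compactin_euclidean_iff)
  have hs: "Hausdorff_space ?T"
    by (simp add: Hausdorff_space_subtopology)
  have xX: "x \<in> X" using CX xC by auto
  have "C \<in> connected_components_of ?T"
    unfolding connected_components_of_def
    using xX ccX by (auto simp: connected_component_of_set connected_component_of_def connectedin_subtopology connected_component_def
          intro!: image_eqI[where x=x])
  then have Cq: "C \<in> quasi_components_of ?T"
    using quasi_eq_connected_components_of csp hs by blast
  define Kc where "Kc = insert p (X \<inter> sphere 0 \<rho>)"
  have pX: "p \<in> X" using \<rho> assms(4) by (auto simp: X_def)
  have "compact Kc" unfolding Kc_def X_def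
    using assms(1) by (intro compact_insert compact_Int_closed closed_Int_compact) auto
  then have cK: "compactin ?T Kc"
    using pX by (auto simp: compactin_subtopology Kc_def compactin_euclidean_iff)
  have "disjnt C Kc"
    using \<rho> assms(5) by (auto simp: Kc_def C_def disjnt_def)
  then have "separated_between ?T C Kc"
    using separated_between_quasi_component_compact[OF Cq cK] by simp
  then obtain A B where AB: "openin ?T A" "openin ?T B" "A \<union> B = X" "disjnt A B" "C \<subseteq> A" "Kc \<subseteq> B"
    unfolding separated_between_def by auto
  have cA: "closedin ?T A"
  proof -
    have "A = X - B" using AB(3,4) by (auto simp: disjnt_def)
    then show ?thesis using AB(2) by auto
  qed
  then have closedA: "closed A" using cX by (simp add: closedin_closed_trans compact_imp_closed)
  obtain W where W: "open W" "A = X \<inter> W" using AB(1) by (auto simp: openin_open)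
  have "A = S \<inter> (W \<inter> ball 0 \<rho>)"
  proof -
    have "A \<inter> sphere 0 \<rho> = {}" using AB(4,6) W by (auto simp: Kc_def disjnt_def)
    then show ?thesis using W unfolding X_def by (auto simp: dist_norm)
  qed
  moreover have "p \<notin> A" using AB(4,6) by (auto simp: Kc_def disjnt_def)
  moreover have "bounded A" using W(2) cX compact_imp_bounded bounded_subset by blast
  ultimately show ?thesis using AB(5) closedA W(1) C_def
    by (intro exI[of _ A] exI[of _ "W \<inter> ball 0 \<rho>"]) auto
qed



definition Fx :: "('m::finite \<Rightarrow> real^'n \<Rightarrow> real^'n) \<Rightarrow> real^'m \<Rightarrow> real^'n \<Rightarrow> real^'n" where
  "Fx F \<xi> = (\<lambda>x. \<Sum>l\<in>UNIV. (\<xi>$l) *\<^sub>R F l x)"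

definition Dl :: "(real^'m::finite) set" where
  "Dl = {\<xi>. (\<forall>l. 0 \<le> \<xi>$l) \<and> (\<Sum>l\<in>UNIV. \<xi>$l) = 1}"

lemma Fx_inner: "Fx F \<xi> x \<bullet> v = (\<Sum>l\<in>UNIV. \<xi>$l * (F l x \<bullet> v))"
  by (simp add: Fx_def inner_sum_left)

lemma Dl_pos: assumes "\<xi> \<in> Dl" obtains l where "\<xi>$l > 0"
proof -
  have "\<exists>l. \<xi>$l > 0"
  proof (rule ccontr)
    assume "\<not> ?thesis"
    then have b: "\<xi>$l \<le> 0" for l by (simp add: not_less)
    have a: "0 \<le> \<xi>$l" for l using assms by (simp add: Dl_def)
    have "\<forall>l. \<xi>$l = 0" using a b by (simp add: antisym)
    then show False using assms by (simp add: Dl_def)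
  qed
  then show ?thesis using that by blast
qed

lemma Sol_sub_Solw:
  assumes "\<xi> \<in> Dl"
  shows "Sol (Fx F \<xi>) K \<subseteq> Sol_w F K"
proof
  fix x assume x: "x \<in> Sol (Fx F \<xi>) K"
  have "\<not> (\<forall>l. F l x \<bullet> (x - y) > 0)" if y: "y \<in> K" for y
  proof
    assume pos: "\<forall>l. F l x \<bullet> (x - y) > 0"
    obtain l0 where l0: "\<xi>$l0 > 0" using Dl_pos[OF assms] by blast
    have "0 < (\<Sum>l\<in>UNIV. \<xi>$l * (F l x \<bullet> (x - y)))"
      using assms pos l0 by (intro sum_pos2[of UNIV l0]) (auto simp: Dl_def intro: mult_nonneg_nonneg less_imp_le mult_pos_pos)
    moreover have "Fx F \<xi> x \<bullet> (y - x) \<ge> 0" using x y by (auto simp: Sol_def)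
    moreover have "Fx F \<xi> x \<bullet> (y - x) = - (\<Sum>l\<in>UNIV. \<xi>$l * (F l x \<bullet> (x - y)))"
      unfolding Fx_inner by (simp add: sum_negf[symmetric] inner_diff_right algebra_simps)
    ultimately show False by linarith
  qed
  then show "x \<in> Sol_w F K" using x by (auto simp: Sol_w_def Sol_def)
qed

lemma Fx_cont: assumes "\<And>l. continuous_on K (F l)" shows "continuous_on K (Fx F \<xi>)"
  unfolding Fx_def by (intro continuous_intros assms)

lemma Fx_mono: assumes "vvi_monotone F K" "\<xi> \<in> Dl" shows "monoK (Fx F \<xi>) K"
  unfolding monoK_def
proof (intro ballI)
  fix x y assume "x \<in> K" "y \<in> K"
  then have "\<forall>l. (F l y - F l x) \<bullet> (y - x) \<ge> 0" using assms(1) by (auto simp: vvi_monotone_def)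
  moreover have "(Fx F \<xi> y - Fx F \<xi> x) \<bullet> (y - x) = (\<Sum>l\<in>UNIV. \<xi>$l * ((F l y - F l x) \<bullet> (y - x)))"
    by (simp add: inner_diff_left Fx_inner sum_subtractf[symmetric] right_diff_distrib)
  ultimately show "(Fx F \<xi> y - Fx F \<xi> x) \<bullet> (y - x) \<ge> 0"
    using assms(2) by (auto simp: Dl_def intro!: sum_nonneg)
qed

lemma Fx_close: "norm (Fx F \<xi>' p - Fx F \<xi> p) \<le> norm (\<xi>' - \<xi>) * (\<Sum>l\<in>UNIV. norm (F l p))"
proof -
  have "Fx F \<xi>' p - Fx F \<xi> p = (\<Sum>l\<in>UNIV. (\<xi>'$l - \<xi>$l) *\<^sub>R F l p)"
    by (simp add: Fx_def sum_subtractf[symmetric] scaleR_diff_left)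
  also have "norm \<dots> \<le> (\<Sum>l\<in>UNIV. norm ((\<xi>'$l - \<xi>$l) *\<^sub>R F l p))" by (rule norm_sum)
  also have "\<dots> \<le> (\<Sum>l\<in>UNIV. norm (\<xi>' - \<xi>) * norm (F l p))"
  proof (rule sum_mono)
    fix l
    have "\<bar>\<xi>'$l - \<xi>$l\<bar> \<le> norm (\<xi>' - \<xi>)" using component_le_norm_cart[of "\<xi>' - \<xi>" l] by simp
    then show "norm ((\<xi>'$l - \<xi>$l) *\<^sub>R F l p) \<le> norm (\<xi>' - \<xi>) * norm (F l p)"
      by (simp add: mult_right_mono)
  qed
  finally show ?thesis by (simp add: sum_distrib_left)
qed

lemma Dl_convex: "convex Dl"
  unfolding convex_def Dl_def
  by (auto simp: sum.distrib sum_distrib_left[symmetric])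

lemma Dl_compact: "compact (Dl :: (real^'m::finite) set)"
proof -
  have "Dl = (\<Inter>l. {\<xi>::real^'m. \<xi>$l \<ge> 0}) \<inter> {\<xi>. (\<Sum>l\<in>UNIV. \<xi>$l) = 1}"
    by (auto simp: Dl_def)
  moreover have "closed {\<xi>::real^'m. (\<Sum>l\<in>UNIV. \<xi>$l) = 1}"
    by (intro closed_Collect_eq continuous_intros)
  moreover have "closed (\<Inter>l. {\<xi>::real^'m. \<xi>$l \<ge> 0})"
    by (intro closed_INT ballI closed_halfspace_component_ge_cart)
  ultimately have "closed (Dl :: (real^'m) set)"
    by (metis closed_Int)
  moreover have "bounded (Dl :: (real^'m) set)"
  proof -
    have "norm \<xi> \<le> 1" if "\<xi> \<in> Dl" for \<xi> :: "real^'m"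
      using norm_le_l1_cart[of \<xi>] that by (simp add: Dl_def)
    then show ?thesis by (auto simp: bounded_iff)
  qed
  ultimately show ?thesis by (simp add: compact_eq_bounded_closed)
qed

lemma Solw_closed:
  assumes "closed K" "\<And>l. continuous_on K (F l)"
  shows "closed (Sol_w F K)"
proof -
  have eq: "Sol_w F K = K \<inter> (\<Inter>y\<in>K. \<Union>l. {x \<in> K. F l x \<bullet> (x - y) \<le> (\<lambda>_. 0) x})"
    by (auto simp: Sol_w_def not_less)
  have c: "closed {x \<in> K. F l x \<bullet> (x - y) \<le> (\<lambda>_. 0) x}" for l y
    by (rule continuous_on_closed_Collect_le) (auto intro!: continuous_intros assms)
  have cl: "closed (\<Inter>y\<in>K. \<Union>l. {x \<in> K. F l x \<bullet> (x - y) \<le> (\<lambda>_. 0) x})"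
    by (intro closed_INT ballI closed_UN c) simp
  show ?thesis unfolding eq by (rule closed_Int[OF assms(1) cl])
qed



lemma convex_comb_pos:
  fixes a b u v :: real
  assumes "a > 0" "b > 0" "u \<ge> 0" "v \<ge> 0" "u + v = 1"
  shows "u * a + v * b > 0"
proof -
  have 1: "u * min a b \<le> u * a" by (rule mult_left_mono) (use assms in auto)
  have 2: "v * min a b \<le> v * b" by (rule mult_left_mono) (use assms in auto)
  have "min a b = (u + v) * min a b" using assms(5) by simp
  also have "\<dots> = u * min a b + v * min a b" by (simp add: algebra_simps)
  also have "\<dots> \<le> u * a + v * b" using 1 2 by linarith
  finally show ?thesis using assms(1,2) by linarith
qed

lemma scalarize:
  fixes F :: "'m::finite \<Rightarrow> real^'n \<Rightarrow> real^'n"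
  assumes cK: "convex K" and xS: "x \<in> Sol_w F K"
  shows "\<exists>\<xi>\<in>Dl. x \<in> Sol (Fx F \<xi>) K"
proof -
  have xK: "x \<in> K" using xS by (simp add: Sol_w_def)
  define a :: "real^'n \<Rightarrow> real^'m" where "a = (\<lambda>y. \<chi> l. F l x \<bullet> (y - x))"
  define A where "A = {a y + p | y p. y \<in> K \<and> (\<forall>l. p$l > 0)}"
  have cA: "convex A"
    unfolding convex_def
  proof (intro ballI allI impI)
    fix v1 v2 and u v :: real
    assume v1: "v1 \<in> A" and v2: "v2 \<in> A" and uv: "0 \<le> u" "0 \<le> v" "u + v = 1"
    obtain y1 p1 where 1: "v1 = a y1 + p1" "y1 \<in> K" "\<forall>l. p1$l > 0" using v1 by (auto simp: A_def)
    obtain y2 p2 where 2: "v2 = a y2 + p2" "y2 \<in> K" "\<forall>l. p2$l > 0" using v2 by (auto simp: A_def)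
    have yK: "u *\<^sub>R y1 + v *\<^sub>R y2 \<in> K" using cK 1 2 uv by (simp add: convex_def)
    have pp: "\<forall>l. (u *\<^sub>R p1 + v *\<^sub>R p2)$l > 0" using 1 2 uv by (simp add: convex_comb_pos)
    have eqy: "u *\<^sub>R y1 + v *\<^sub>R y2 - x = u *\<^sub>R (y1 - x) + v *\<^sub>R (y2 - x)"
      using uv by (simp add: algebra_simps flip: scaleR_add_left)
    have "\<forall>l. F l x \<bullet> (u *\<^sub>R y1 + v *\<^sub>R y2 - x) = u * (F l x \<bullet> (y1 - x)) + v * (F l x \<bullet> (y2 - x))"
      unfolding eqy by (simp add: inner_add_right inner_scaleR_right)
    then have la: "a (u *\<^sub>R y1 + v *\<^sub>R y2) = u *\<^sub>R a y1 + v *\<^sub>R a y2"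
      by (simp add: a_def vec_eq_iff)
    have "u *\<^sub>R v1 + v *\<^sub>R v2 = a (u *\<^sub>R y1 + v *\<^sub>R y2) + (u *\<^sub>R p1 + v *\<^sub>R p2)"
      using 1 2 la by (simp add: algebra_simps)
    then show "u *\<^sub>R v1 + v *\<^sub>R v2 \<in> A" unfolding A_def using yK pp by blast
  qed
  have n0: "0 \<notin> A"
  proof
    assume "0 \<in> A"
    then obtain y p where yp: "0 = a y + p" "y \<in> K" "\<forall>l. p$l > 0" by (auto simp: A_def)
    have "F l x \<bullet> (x - y) > 0" for l
    proof -
      have "F l x \<bullet> (y - x) + p$l = 0" using yp(1) by (simp add: a_def vec_eq_iff)
      then show ?thesis using yp(3)[rule_format, of l] by (simp add: inner_diff_right)
    qed
    then show False using xS yp(2) by (auto simp: Sol_w_def)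
  qed
  obtain \<xi> :: "real^'m" where \<xi>: "\<xi> \<noteq> 0" "\<forall>v\<in>A. 0 \<le> \<xi> \<bullet> v"
    using separating_hyperplane_set_0[OF cA n0] by blast
  define one :: "real^'m" where "one = (\<chi> j. 1)"
  define s where "s = (\<Sum>l\<in>UNIV. \<xi>$l)"
  have inner_one: "\<xi> \<bullet> one = s" by (simp add: one_def s_def inner_vec_def)
  have ax: "a x = 0" by (simp add: a_def vec_eq_iff)
  have pA: "p \<in> A" if "\<forall>l. p$l > 0" for p
  proof -
    have "p = a x + p" by (simp add: ax)
    then show ?thesis using xK that unfolding A_def by blast
  qed
  have \<xi>nn: "\<xi>$l \<ge> 0" for l
  proof (rule ccontr)
    assume "\<not> \<xi>$l \<ge> 0"
    then have neg: "\<xi>$l < 0" by simp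
    define M where "M = (\<bar>s\<bar> + 1) / (- \<xi>$l)"
    have M0: "M > 0" unfolding M_def using neg abs_ge_zero[of s] by (intro divide_pos_pos) linarith+
    define p where "p = one + M *\<^sub>R axis l 1"
    have "\<forall>j. p$j > 0" using M0 by (simp add: p_def one_def axis_def)
    then have "0 \<le> \<xi> \<bullet> p" using pA \<xi>(2) by blast
    moreover have "\<xi> \<bullet> p = s + M * \<xi>$l"
      by (simp add: p_def inner_add_right inner_one inner_axis)
    moreover have "M * \<xi>$l = - (\<bar>s\<bar> + 1)" using neg by (simp add: M_def)
    ultimately show False by linarith
  qed
  have s0: "s > 0"
  proof -
    obtain l where "\<xi>$l \<noteq> 0" using \<xi>(1) by (auto simp: vec_eq_iff)
    then have "\<xi>$l > 0" using \<xi>nn[of l] by simp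
    then show ?thesis unfolding s_def using \<xi>nn by (intro sum_pos2[of UNIV l]) auto
  qed
  have \<xi>a: "\<xi> \<bullet> a y \<ge> 0" if y: "y \<in> K" for y
  proof (rule ccontr)
    assume "\<not> ?thesis"
    then have c: "\<xi> \<bullet> a y < 0" by simp
    define \<delta> where "\<delta> = - (\<xi> \<bullet> a y) / (2 * s)"
    have \<delta>0: "\<delta> > 0" unfolding \<delta>_def using c s0 by (intro divide_pos_pos) auto
    have "\<forall>l. (\<delta> *\<^sub>R one)$l > 0" using \<delta>0 by (simp add: one_def)
    then have "a y + \<delta> *\<^sub>R one \<in> A" using y unfolding A_def by blast
    then have "0 \<le> \<xi> \<bullet> (a y + \<delta> *\<^sub>R one)" using \<xi>(2) by blast
    moreover have "\<xi> \<bullet> (a y + \<delta> *\<^sub>R one) = \<xi> \<bullet> a y + \<delta> * s"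
      by (simp add: inner_add_right inner_one)
    moreover have "\<delta> * s = - (\<xi> \<bullet> a y) / 2" using s0 by (simp add: \<delta>_def)
    ultimately show False using c by linarith
  qed
  define \<zeta> where "\<zeta> = (1 / s) *\<^sub>R \<xi>"
  have "\<zeta> \<in> Dl"
    using s0 \<xi>nn by (simp add: Dl_def \<zeta>_def s_def sum_divide_distrib[symmetric])
  moreover have "x \<in> Sol (Fx F \<zeta>) K"
    unfolding Sol_def
  proof (intro CollectI conjI ballI xK)
    fix y assume y: "y \<in> K"
    have e1: "\<xi> \<bullet> a y = (\<Sum>l\<in>UNIV. \<xi>$l * (F l x \<bullet> (y - x)))"
      unfolding inner_vec_def[of \<xi> "a y"] by (simp add: a_def)
    have "Fx F \<zeta> x \<bullet> (y - x) = (1 / s) * (\<xi> \<bullet> a y)"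
      unfolding e1 Fx_inner by (simp add: \<zeta>_def sum_distrib_left mult.assoc)
    then show "0 \<le> Fx F \<zeta> x \<bullet> (y - x)" using \<xi>a[OF y] s0 by simp
  qed
  ultimately show ?thesis by blast
qed



lemma Lam_closed:
  fixes F :: "'m::finite \<Rightarrow> real^'n \<Rightarrow> real^'n"
  assumes cont: "\<And>l. continuous_on K (F l)" and V: "compact V" "V \<subseteq> K"
  shows "closed {\<xi>\<in>Dl. Sol (Fx F \<xi>) K \<inter> V \<noteq> {}}"
proof -
  define h where "h = (\<lambda>y (q::(real^'m) \<times> (real^'n)). \<Sum>l\<in>UNIV. (fst q)$l * (F l (snd q) \<bullet> (y - snd q)))"
  have hq: "h y q = Fx F (fst q) (snd q) \<bullet> (y - snd q)" for y q by (simp add: h_def Fx_inner)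
  have cF: "continuous_on (Dl \<times> V) (\<lambda>q. F l (snd q))" for l
    by (rule continuous_on_compose2[OF cont continuous_on_snd]) (use V(2) in auto)
  have ch: "continuous_on (Dl \<times> V) (h y)" for y
    unfolding h_def by (intro continuous_intros cF)
  have cDV: "compact (Dl \<times> V)" using Dl_compact V(1) by (rule compact_Times)
  then have clDV: "closed (Dl \<times> V)" by (rule compact_imp_closed)
  have cl: "closed {q \<in> Dl \<times> V. (\<lambda>_. 0) q \<le> h y q}" for y
    by (rule continuous_on_closed_Collect_le[OF _ ch clDV]) (rule continuous_on_const)
  define Gr where "Gr = (Dl \<times> V) \<inter> (\<Inter>y\<in>K. {q \<in> Dl \<times> V. (\<lambda>_. 0) q \<le> h y q})"
  have "closed (\<Inter>y\<in>K. {q \<in> Dl \<times> V. (\<lambda>_. 0) q \<le> h y q})"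
    by (intro closed_INT ballI cl)
  then have cG: "compact Gr" unfolding Gr_def by (rule compact_Int_closed[OF cDV])
  have "{\<xi>\<in>Dl. Sol (Fx F \<xi>) K \<inter> V \<noteq> {}} = fst ` Gr"
  proof (intro equalityI subsetI)
    fix \<xi> assume "\<xi> \<in> {\<xi>\<in>Dl. Sol (Fx F \<xi>) K \<inter> V \<noteq> {}}"
    then obtain z where z: "\<xi> \<in> Dl" "z \<in> Sol (Fx F \<xi>) K" "z \<in> V" by auto
    then have "(\<xi>, z) \<in> Gr" by (auto simp: Gr_def hq Sol_def)
    then show "\<xi> \<in> fst ` Gr" by force
  next
    fix \<xi> assume "\<xi> \<in> fst ` Gr"
    then obtain z where z: "(\<xi>, z) \<in> Gr" by force
    then have "\<xi> \<in> Dl" "z \<in> V" "z \<in> Sol (Fx F \<xi>) K" using V(2) by (auto simp: Gr_def hq Sol_def)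
    then show "\<xi> \<in> {\<xi>\<in>Dl. Sol (Fx F \<xi>) K \<inter> V \<noteq> {}}" by auto
  qed
  moreover have "compact (fst ` Gr)" using cG by (intro compact_continuous_image continuous_on_fst continuous_on_id)
  ultimately show ?thesis by (simp add: compact_imp_closed)
qed

theorem theorem2:
  fixes F :: "'m::finite \<Rightarrow> real^'n \<Rightarrow> real^'n" and K :: "(real^'n) set"
  assumes "K \<noteq> {}" and "closed K" and "convex K"
    and "\<And>l. continuous_on K (F l)"
    and "vvi_monotone F K"
    and "\<not> connected (Sol_w F K)"
  shows "\<forall>x\<in>Sol_w F K. \<not> bounded (connected_component_set (Sol_w F K) x)"
proof (intro ballI notI)
  fix x assume xS: "x \<in> Sol_w F K" and bd: "bounded (connected_component_set (Sol_w F K) x)"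
  define S where "S = Sol_w F K"
  have cS: "closed S" unfolding S_def using assms(2,4) by (rule Solw_closed)
  have SK: "S \<subseteq> K" by (auto simp: S_def Sol_w_def)
  obtain p where p: "p \<in> S" "p \<notin> connected_component_set S x"
  proof -
    have "connected_component_set S x \<noteq> S"
      by (metis S_def assms(6) connected_connected_component)
    moreover have "connected_component_set S x \<subseteq> S" by (rule connected_component_subset)
    ultimately show thesis using that by blast
  qed
  obtain V W where VW: "V \<subseteq> S" "connected_component_set S x \<subseteq> V" "p \<notin> V" "bounded V" "closed V"
    "open W" "V = S \<inter> W"
    using clopen_nbhd[OF cS _ _ p] xS bd by (auto simp: S_def)
  have cV: "compact V" using VW by (simp add: compact_eq_bounded_closed)
  have VK: "V \<subseteq> K" using VW(1) SK by blast
  have SolS: "Sol (Fx F \<xi>) K \<subseteq> S" if "\<xi> \<in> Dl" for \<xi> unfolding S_def using that by (rule Sol_sub_Solw)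
  have key: "Sol (Fx F \<xi>) K \<subseteq> V" if \<xi>: "\<xi> \<in> Dl" and ne: "Sol (Fx F \<xi>) K \<inter> V \<noteq> {}" for \<xi>
  proof -
    define Z where "Z = Sol (Fx F \<xi>) K"
    have "convex Z" unfolding Z_def
      by (rule sol_convex[OF assms(3) Fx_cont[OF assms(4)] Fx_mono[OF assms(5) \<xi>]])
    then have cZ: "connected Z" by (rule convex_connected)
    have ZS: "Z \<subseteq> S" using SolS[OF \<xi>] by (simp add: Z_def)
    have "Z \<inter> V = Z \<inter> W" using ZS VW(7) by auto
    then have "openin (top_of_set Z) (Z \<inter> V)" using VW(6) by auto
    moreover have "closedin (top_of_set Z) (Z \<inter> V)" using VW(5) by (rule closedin_closed_Int)
    ultimately have "Z \<inter> V = {} \<or> Z \<inter> V = Z" using cZ unfolding connected_clopen by blast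
    then show ?thesis using ne by (auto simp: Z_def)
  qed
  define \<Lambda> where "\<Lambda> = {\<xi>\<in>Dl. Sol (Fx F \<xi>) K \<inter> V \<noteq> {}}"
  have ne: "\<Lambda> \<noteq> {}"
  proof -
    obtain \<xi> where "\<xi> \<in> Dl" "x \<in> Sol (Fx F \<xi>) K" using scalarize[OF assms(3) xS] by blast
    moreover have "x \<in> V" using VW(2) xS by (auto simp: S_def)
    ultimately show ?thesis by (auto simp: \<Lambda>_def)
  qed
  have nf: "\<Lambda> \<noteq> Dl"
  proof
    assume eq: "\<Lambda> = Dl"
    obtain \<xi> where \<xi>: "\<xi> \<in> Dl" "p \<in> Sol (Fx F \<xi>) K" using scalarize[OF assms(3)] p(1) by (auto simp: S_def)
    then have "\<xi> \<in> \<Lambda>" using eq by simp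
    then have "Sol (Fx F \<xi>) K \<subseteq> V" using key by (auto simp: \<Lambda>_def)
    then show False using \<xi>(2) VW(3) by blast
  qed
  have clo: "closedin (top_of_set Dl) \<Lambda>"
    by (rule closed_subset) (auto simp: \<Lambda>_def intro: Lam_closed[OF assms(4) cV VK])
  have opn: "openin (top_of_set Dl) \<Lambda>"
    unfolding openin_euclidean_subtopology_iff
  proof (intro conjI ballI)
    show "\<Lambda> \<subseteq> Dl" by (auto simp: \<Lambda>_def)
  next
    fix \<xi> assume \<xi>\<Lambda>: "\<xi> \<in> \<Lambda>"
    then have \<xi>: "\<xi> \<in> Dl" and ne: "Sol (Fx F \<xi>) K \<inter> V \<noteq> {}" by (auto simp: \<Lambda>_def)
    define G where "G = Fx F \<xi>"
    obtain x0 where x0: "x0 \<in> Sol G K" "x0 \<in> V" using ne by (auto simp: G_def)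
    have SV: "Sol G K \<subseteq> V" using key[OF \<xi> ne] by (simp add: G_def)
    obtain r where r: "r > 0" "V \<subseteq> ball x0 r" using bounded_subset_ballD[OF VW(4)] by blast
    define U where "U = W \<inter> ball x0 r"
    have oU: "open U" using VW(6) by (simp add: U_def open_Int)
    have SU: "Sol G K \<subseteq> U" using SV r(2) VW(7) by (auto simp: U_def)
    have Ub: "U \<subseteq> ball x0 r" by (simp add: U_def)
    obtain P \<epsilon> where P: "finite P" "P \<subseteq> K" "\<epsilon> > 0"
      and st: "\<And>G'. continuous_on K G' \<Longrightarrow> monoK G' K \<Longrightarrow> (\<forall>p\<in>P. norm (G' p - G p) < \<epsilon>)
        \<Longrightarrow> (\<exists>x\<in>U. x \<in> Sol G' K)"
      using stab[OF assms(2,3) Fx_cont[OF assms(4)] Fx_mono[OF assms(5) \<xi>] x0(1)[unfolded G_def] oU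
          SU[unfolded G_def] Ub] unfolding G_def by blast
    define M where "M = (\<Sum>q\<in>P. \<Sum>l\<in>UNIV. norm (F l q)) + 1"
    have cpM: "(\<Sum>l\<in>UNIV. norm (F l q)) \<le> M - 1" if "q \<in> P" for q
    proof -
      have "(\<Sum>l\<in>UNIV. norm (F l q)) \<le> (\<Sum>q\<in>P. \<Sum>l\<in>UNIV. norm (F l q))"
        using P(1) that by (intro member_le_sum) (auto intro: sum_nonneg)
      then show ?thesis by (simp add: M_def)
    qed
    have "(\<Sum>q\<in>P. \<Sum>l\<in>UNIV. norm (F l q)) \<ge> 0" by (intro sum_nonneg) simp
    then have M0: "M > 0" unfolding M_def by linarith
    define e where "e = \<epsilon> / M"
    have e0: "e > 0" using P(3) M0 by (simp add: e_def)
    show "\<exists>e>0. \<forall>\<xi>'\<in>Dl. dist \<xi>' \<xi> < e \<longrightarrow> \<xi>' \<in> \<Lambda>"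
    proof (intro exI[of _ e] conjI e0 ballI impI)
      fix \<xi>' assume \<xi>': "\<xi>' \<in> Dl" and d: "dist \<xi>' \<xi> < e"
      have "\<forall>q\<in>P. norm (Fx F \<xi>' q - G q) < \<epsilon>"
      proof
        fix q assume q: "q \<in> P"
        have "norm (Fx F \<xi>' q - G q) \<le> norm (\<xi>' - \<xi>) * (\<Sum>l\<in>UNIV. norm (F l q))"
          unfolding G_def by (rule Fx_close)
        also have "\<dots> \<le> norm (\<xi>' - \<xi>) * M" using cpM[OF q] by (intro mult_left_mono) auto
        also have "\<dots> < e * M" using d M0 by (simp add: dist_norm)
        also have "\<dots> = \<epsilon>" using M0 by (simp add: e_def)
        finally show "norm (Fx F \<xi>' q - G q) < \<epsilon>" .
      qed
      then obtain z where z: "z \<in> U" "z \<in> Sol (Fx F \<xi>') K"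
        using st[OF Fx_cont[OF assms(4)] Fx_mono[OF assms(5) \<xi>']] by blast
      have "z \<in> S" using SolS[OF \<xi>'] z(2) by blast
      then have "z \<in> V" using z(1) VW(7) by (auto simp: U_def)
      then show "\<xi>' \<in> \<Lambda>" using z(2) \<xi>' by (auto simp: \<Lambda>_def)
    qed
  qed
  have "connected (Dl :: (real^'m) set)" by (rule convex_connected[OF Dl_convex])
  then have "\<Lambda> = {} \<or> \<Lambda> = Dl" using opn clo unfolding connected_clopen by blast
  then show False using ne nf by blast
qed


end
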